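(* Let $N\ge3$ and $p>p_{\rm S}$. For $\gamma>0$ let $u(\cdot,\gamma)$ solve (IVP$_\gamma$), set $y(t,\gamma):=2^{-\frac{q}{p-1}}\frac{u(r,\gamma)}{ar^{-\mu}}$ with $r=e^{mt}$, and $\hat y(s,\gamma):=y\big(s-\frac{\log\gamma}{m\mu},\gamma\big)$. Let $\bar u$ be the solution of $\bar u''+\frac{N-1}{\rho}\bar u'+\bar u^p=0$ $(0<\rho<\infty)$, $\bar u(0)=2^{-\frac{q}{p-1}}$, $\bar u'(0)=0$, and $\bar y(s):=\frac{\bar u(e^{ms})}{ae^{-m\mu s}}$. Then for every $s_0\in\mathbb{R}$, as $\gamma\to\infty$, $\hat y(\cdot,\gamma)\to\bar y$ and $\partial_s\hat y(\cdot,\gamma)\to\bar y'$ uniformly on $(-\infty,s_0]$.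
   Context: $A(r)=\frac{2}{1+r^2}$, $p_{\rm S}=\frac{N+2}{N-2}$, $q=\frac{N-2}{2}(p-p_{\rm S})$, $\mu=\frac{2}{p-1}$, $a=\{\mu(N-2-\mu)\}^{\mu/2}$, $m=a^{-(p-1)/2}$. (IVP$_\gamma$): $u''+\frac{N-1}{r}u'+\frac{N(N-2)}{4}A(r)^2u+A(r)^{-q}|u|^{p-1}u=0$ on $(0,\infty)$, $u(0)=\gamma$, $u'(0)=0$. (For $p>p_{\rm S}$, $\bar u>0$ on $[0,\infty)$.) *)

theory Defs
  imports "HOL-Analysis.Analysis"
begin

definition A_fun :: "real \<Rightarrow> real" where
  "A_fun r = 2 / (1 + r\<^sup>2)"

definition pS :: "nat \<Rightarrow> real" where
  "pS N = (real N + 2) / (real N - 2)"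

definition q_exp :: "nat \<Rightarrow> real \<Rightarrow> real" where
  "q_exp N p = (real N - 2) / 2 * (p - pS N)"

definition mu :: "real \<Rightarrow> real" where
  "mu p = 2 / (p - 1)"

definition a_const :: "nat \<Rightarrow> real \<Rightarrow> real" where
  "a_const N p = (mu p * (real N - 2 - mu p)) powr (mu p / 2)"

definition m_const :: "nat \<Rightarrow> real \<Rightarrow> real" where
  "m_const N p = a_const N p powr (-(p - 1) / 2)"

definition ivp_sol :: "nat \<Rightarrow> real \<Rightarrow> real \<Rightarrow> (real \<Rightarrow> real) \<Rightarrow> bool" where
  "ivp_sol N p \<gamma> u \<longleftrightarrow>
     (\<exists>u' u''. (\<forall>r\<ge>0. (u has_real_derivative u' r) (at r within {0..})) \<and>
        (\<forall>r>0. (u' has_real_derivative u'' r) (at r)) \<and>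
        (\<forall>r>0. u'' r + (real N - 1) / r * u' r
                + real N * (real N - 2) / 4 * (A_fun r)\<^sup>2 * u r
                + A_fun r powr (- q_exp N p) * (\<bar>u r\<bar> powr (p - 1) * u r) = 0) \<and>
        u 0 = \<gamma> \<and> u' 0 = 0)"

text \<open>Solution of ubar'' + (N-1)/rho ubar' + ubar^p = 0, ubar(0) = 2^(-q/(p-1)), ubar'(0)=0.
  The nonlinearity is written |ubar|^(p-1) ubar, which equals ubar^p since ubar > 0.\<close>
definition ubar_sol :: "nat \<Rightarrow> real \<Rightarrow> (real \<Rightarrow> real) \<Rightarrow> bool" where
  "ubar_sol N p u \<longleftrightarrow>
     (\<exists>u' u''. (\<forall>r\<ge>0. (u has_real_derivative u' r) (at r within {0..})) \<and>
        (\<forall>r>0. (u' has_real_derivative u'' r) (at r)) \<and>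
        (\<forall>r>0. u'' r + (real N - 1) / r * u' r + \<bar>u r\<bar> powr (p - 1) * u r = 0) \<and>
        u 0 = 2 powr (- (q_exp N p / (p - 1))) \<and> u' 0 = 0)"

definition y_fun :: "nat \<Rightarrow> real \<Rightarrow> (real \<Rightarrow> real \<Rightarrow> real) \<Rightarrow> real \<Rightarrow> real \<Rightarrow> real" where
  "y_fun N p u \<gamma> t =
     2 powr (- (q_exp N p / (p - 1))) * u \<gamma> (exp (m_const N p * t))
       / (a_const N p * exp (m_const N p * t) powr (- mu p))"

definition yhat :: "nat \<Rightarrow> real \<Rightarrow> (real \<Rightarrow> real \<Rightarrow> real) \<Rightarrow> real \<Rightarrow> real \<Rightarrow> real" where
  "yhat N p u \<gamma> s = y_fun N p u \<gamma> (s - ln \<gamma> / (m_const N p * mu p))"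

definition ybar :: "nat \<Rightarrow> real \<Rightarrow> (real \<Rightarrow> real) \<Rightarrow> real \<Rightarrow> real" where
  "ybar N p ub s = ub (exp (m_const N p * s)) / (a_const N p * exp (- m_const N p * mu p * s))"

end

theory Submission
  imports Defs
begin


lemma comparison:
  fixes e ea eb D :: "real \<Rightarrow> real" and k L \<delta> R :: real
  assumes R: "R > 0" and k: "k \<ge> 0" and L: "L \<ge> 0" and dl: "\<delta> \<ge> 0"
    and de: "\<And>t. t \<ge> 0 \<Longrightarrow> (e has_real_derivative ea t) (at t within {0..})"
    and de1: "\<And>t. t > 0 \<Longrightarrow> (ea has_real_derivative eb t) (at t)"
    and eq: "\<And>t. t > 0 \<Longrightarrow> eb t + k / t * ea t + D t = 0"
    and e0: "e 0 = 0" and e10: "ea 0 = 0"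
    and bnd: "\<And>t. 0 < t \<Longrightarrow> t \<le> R \<Longrightarrow> \<bar>e t\<bar> \<le> 1 \<Longrightarrow> \<bar>D t\<bar> \<le> \<delta> + L * \<bar>e t\<bar>"
    and small: "exp ((L+2)*R) * \<delta>\<^sup>2 / (L+2) < 1/4"
  shows "\<forall>t\<in>{0..R}. (e t)\<^sup>2 + (ea t)\<^sup>2 \<le> exp ((L+2)*R) * \<delta>\<^sup>2 / (L+2)"
proof -
  define C where "C = L + 2"
  have C: "C > 0" using L by (simp add: C_def)
  define Q where "Q t = (e t)\<^sup>2 + (ea t)\<^sup>2" for t
  define \<Phi> where "\<Phi> t = exp (-C*t) * (Q t + \<delta>\<^sup>2/C)" for t
  have deat: "(e has_real_derivative ea t) (at t)" if "t > 0" for t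
    using de[of t] that at_within_interior[of t "{0..}"] by simp
  have dPhi: "(\<Phi> has_real_derivative exp (-C*t) * (2*e t*ea t + 2*ea t*eb t - C*Q t - \<delta>\<^sup>2)) (at t)" if "t > 0" for t
    unfolding \<Phi>_def Q_def
    using deat[OF that] de1[OF that] C
    by (auto intro!: derivative_eq_intros simp: algebra_simps)
  have dneg: "2*e t*ea t + 2*ea t*eb t - C*Q t - \<delta>\<^sup>2 \<le> 0" if "t > 0" "t \<le> R" "\<bar>e t\<bar> \<le> 1" for t
  proof -
    have eb: "eb t = - (k/t * ea t) - D t" using eq[OF that(1)] by (simp add: algebra_simps)
    have kt: "k/t*(ea t)^2 \<ge> 0" using k that(1) by simp
    have Db: "\<bar>D t\<bar> \<le> \<delta> + L*\<bar>e t\<bar>" using bnd that by simp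
    have "- (ea t * D t) \<le> \<bar>ea t\<bar> * \<bar>D t\<bar>" by (simp add: abs_mult[symmetric])
    also have "\<dots> \<le> \<bar>ea t\<bar>*(\<delta> + L*\<bar>e t\<bar>)" using Db by (simp add: mult_left_mono)
    finally have a: "- (ea t * D t) \<le> \<bar>ea t\<bar>*\<delta> + L*(\<bar>ea t\<bar>*\<bar>e t\<bar>)" by (simp add: algebra_simps)
    have b: "2*\<bar>e t\<bar>*\<bar>ea t\<bar> \<le> (e t)^2 + (ea t)^2"
    proof -
      have "0 \<le> (\<bar>e t\<bar> - \<bar>ea t\<bar>)^2" by simp
      thus ?thesis by (simp add: power2_diff)
    qed
    have c: "2*\<bar>ea t\<bar>*\<delta> \<le> (ea t)^2 + \<delta>^2"
    proof -
      have "0 \<le> (\<bar>ea t\<bar> - \<delta>)^2" by simp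
      thus ?thesis by (simp add: power2_diff)
    qed
    have d: "L*(2*(\<bar>e t\<bar>*\<bar>ea t\<bar>)) \<le> L*((e t)^2 + (ea t)^2)"
      using b L by (intro mult_left_mono) (auto simp: mult.commute mult.left_commute)
    have f: "e t * ea t \<le> \<bar>e t\<bar>*\<bar>ea t\<bar>" by (simp add: abs_mult[symmetric])
    have g: "2*e t*ea t + 2*ea t*eb t - C*Q t - \<delta>\<^sup>2 =
       2*(e t * ea t) - 2*(k/t*(ea t)^2) - 2*(ea t * D t) - L*(e t)^2 - L*(ea t)^2 - 2*(e t)^2 - 2*(ea t)^2 - \<delta>^2"
      by (simp add: eb Q_def C_def algebra_simps power2_eq_square)
    have a': "- (ea t * D t) \<le> \<bar>ea t\<bar>*\<delta> + L*(\<bar>e t\<bar>*\<bar>ea t\<bar>)" using a by (simp add: mult.commute)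
    have b': "2*(\<bar>e t\<bar>*\<bar>ea t\<bar>) \<le> (e t)^2 + (ea t)^2" using b by simp
    have c': "2*(\<bar>ea t\<bar>*\<delta>) \<le> (ea t)^2 + \<delta>^2" using c by simp
    have d': "2*(L*(\<bar>e t\<bar>*\<bar>ea t\<bar>)) \<le> L*(e t)^2 + L*(ea t)^2" using d by (simp add: algebra_simps)
    show ?thesis unfolding g using a' b' c' d' f kt zero_le_power2[of "e t"] by linarith
  qed
  have stepb: "Q t \<le> exp (C*t) * \<delta>\<^sup>2 / C"
    if t: "0 < t" "t \<le> R" and sm: "\<And>s. 0 < s \<Longrightarrow> s \<le> t \<Longrightarrow> \<bar>e s\<bar> \<le> 1" for t
  proof -
    have mono: "\<Phi> t \<le> \<Phi> s" if s: "0 < s" "s \<le> t" for s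
    proof (rule DERIV_nonpos_imp_nonincreasing[OF s(2)])
      fix x assume x: "s \<le> x" "x \<le> t"
      show "\<exists>y. DERIV \<Phi> x :> y \<and> y \<le> 0"
        using dPhi[of x] dneg[of x] sm[of x] x s t
        by (intro exI[of _ "exp (-C*x) * (2*e x*ea x + 2*ea x*eb x - C*Q x - \<delta>\<^sup>2)"])
           (auto intro!: mult_nonneg_nonpos)
    qed
    have eps: "\<Phi> t \<le> \<delta>\<^sup>2/C + \<eta>" if eta: "\<eta> > 0" for \<eta>
    proof -
      define r where "r = sqrt (\<eta>/2)"
      have r: "r > 0" using eta by (simp add: r_def)
      have d0: "(e has_real_derivative 0) (at 0 within {0..})" using de[of 0] e10 by simp
      have le: "at_right (0::real) \<le> at 0 within {0..}" by (rule at_le) auto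
      have "(e \<longlongrightarrow> e 0) (at 0 within {0..})"
        using DERIV_continuous[OF d0] by (simp add: continuous_within)
      hence "(e \<longlongrightarrow> 0) (at_right 0)" using le e0 tendsto_mono by metis
      from tendstoD[OF this r] have ev1: "eventually (\<lambda>x. \<bar>e x\<bar> < r) (at_right 0)"
        by (simp add: dist_real_def)
      have "((\<lambda>y. (e y - e 0) / (y - 0)) \<longlongrightarrow> 0) (at 0 within {0..})"
        using d0 by (simp add: has_field_derivative_iff)
      hence "((\<lambda>y. e y / y) \<longlongrightarrow> 0) (at_right 0)" using le e0 tendsto_mono by fastforce
      from tendstoD[OF this r] have ev2: "eventually (\<lambda>x. \<bar>e x / x\<bar> < r) (at_right 0)"
        by (simp add: dist_real_def)
      from eventually_conj[OF ev1 ev2] obtain b where b: "b > 0"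
        and P: "\<And>y. y > 0 \<Longrightarrow> y < b \<Longrightarrow> \<bar>e y\<bar> < r \<and> \<bar>e y / y\<bar> < r"
        unfolding eventually_at_right_field by auto
      define s' where "s' = min b t / 2"
      have s': "0 < s'" "s' < b" "s' < t" using b t by (auto simp: s'_def)
      obtain \<xi> where \<xi>: "\<xi> \<in> {0<..<s'}" and mv: "e s' - e 0 = ea \<xi> * (s' - 0)"
      proof -
        have "(e has_derivative (\<lambda>h. h * ea x)) (at x within {0..s'})" if "0 \<le> x" "x \<le> s'" for x
        proof -
          have "(e has_real_derivative ea x) (at x within {0..s'})"
            by (rule DERIV_subset[OF de]) (use that in auto)
          moreover have "(\<lambda>h. h * ea x) = (*) (ea x)" by (auto simp: mult.commute)
          ultimately show ?thesis by (simp add: has_field_derivative_def)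
        qed
        from mvt_simple[OF s'(1) this] show ?thesis using that by auto
      qed
      have "ea \<xi> = e s' / s'" using mv e0 s' by (simp add: field_simps)
      hence a1: "\<bar>ea \<xi>\<bar> < r" using P[of s'] s' by simp
      have a2: "\<bar>e \<xi>\<bar> < r" using P[of \<xi>] \<xi> s' by simp
      have "(ea \<xi>)^2 < r^2" using power_strict_mono[OF a1 abs_ge_zero, of 2] by simp
      moreover have "(e \<xi>)^2 < r^2" using power_strict_mono[OF a2 abs_ge_zero, of 2] by simp
      moreover have "r^2 = \<eta>/2" using eta by (simp add: r_def)
      ultimately have Qx: "Q \<xi> < \<eta>" by (simp add: Q_def)
      have "\<Phi> t \<le> \<Phi> \<xi>" using mono[of \<xi>] \<xi> s' by simp
      also have "\<Phi> \<xi> \<le> Q \<xi> + \<delta>\<^sup>2/C"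
      proof -
        have "exp (-C*\<xi>) \<le> 1" using C \<xi> by simp
        moreover have "Q \<xi> + \<delta>\<^sup>2/C \<ge> 0" using C by (simp add: Q_def)
        ultimately show ?thesis unfolding \<Phi>_def by (simp add: mult_left_le_one_le)
      qed
      finally show ?thesis using Qx by simp
    qed
    have "\<Phi> t \<le> \<delta>\<^sup>2/C" using eps by (rule field_le_epsilon)
    hence "exp (C*t) * \<Phi> t \<le> exp (C*t) * (\<delta>\<^sup>2/C)" by (rule mult_left_mono) simp
    moreover have "exp (C*t) * \<Phi> t = Q t + \<delta>\<^sup>2/C" unfolding \<Phi>_def
      by (simp add: exp_minus field_simps)
    moreover have "\<delta>\<^sup>2/C \<ge> 0" using C by simp
    ultimately show ?thesis by simp
  qed
  have all_small: "\<forall>t\<in>{0..R}. \<bar>e t\<bar> < 1/2"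
  proof (rule ccontr)
    assume "\<not> ?thesis"
    then obtain t0 where t0: "t0 \<in> {0..R}" "\<bar>e t0\<bar> \<ge> 1/2" by force
    have cont: "continuous_on {0..R} e"
      by (rule DERIV_continuous_on[of _ _ ea]) (rule DERIV_subset[OF de], auto)
    have conta: "continuous_on {0..R} (\<lambda>t. \<bar>e t\<bar>)" using cont by (rule continuous_on_rabs)
    define S where "S = {0..R} \<inter> (\<lambda>t. \<bar>e t\<bar>) -` {1/2..}"
    have "closed S" unfolding S_def by (rule continuous_closed_preimage[OF conta]) auto
    moreover have "bounded S" unfolding S_def by (rule bounded_subset[of "{0..R}"]) auto
    ultimately have "compact S" by (simp add: compact_eq_bounded_closed)
    moreover have "S \<noteq> {}" using t0 by (auto simp: S_def)
    ultimately obtain T where T: "T \<in> S" and Tmin: "\<And>y. y \<in> S \<Longrightarrow> T \<le> y"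
      using continuous_attains_inf[of S id] by (auto simp: continuous_on_id)
    have T1: "0 \<le> T" "T \<le> R" "\<bar>e T\<bar> \<ge> 1/2" using T by (auto simp: S_def)
    have "T \<noteq> 0" using T1 e0 by auto
    hence Tp: "T > 0" using T1 by simp
    obtain x where x: "0 \<le> x" "x \<le> T" "\<bar>e x\<bar> = 1/2"
      using IVT'[of "\<lambda>t. \<bar>e t\<bar>" 0 "1/2" T] T1 e0 continuous_on_subset[OF conta, of "{0..T}"] by auto
    have "x \<in> S" using x T1 by (auto simp: S_def)
    hence "x = T" using Tmin[of x] x by simp
    hence eT: "\<bar>e T\<bar> = 1/2" using x by simp
    have "Q T \<le> exp (C*T) * \<delta>\<^sup>2 / C"
    proof (rule stepb[OF Tp T1(2)])
      fix s assume s: "0 < s" "s \<le> T"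
      show "\<bar>e s\<bar> \<le> 1"
      proof (cases "s = T")
        case True thus ?thesis using eT by simp
      next
        case False
        hence "s \<notin> S" using Tmin[of s] s by auto
        thus ?thesis using s T1 by (auto simp: S_def)
      qed
    qed
    also have "\<dots> \<le> exp (C*R) * \<delta>\<^sup>2 / C" using T1 C by (auto intro!: divide_right_mono mult_right_mono)
    also have "\<dots> < 1/4" using small by (simp add: C_def)
    finally have "Q T < 1/4" .
    moreover have "Q T \<ge> (e T)^2" by (simp add: Q_def)
    moreover have "(e T)^2 = \<bar>e T\<bar>^2" by simp
    ultimately show False using eT by (simp add: power2_eq_square)
  qed
  show ?thesis
  proof
    fix t assume t: "t \<in> {0..R}"
    show "(e t)\<^sup>2 + (ea t)\<^sup>2 \<le> exp ((L+2)*R) * \<delta>\<^sup>2 / (L+2)"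
    proof (cases "t = 0")
      case True thus ?thesis using e0 e10 L by simp
    next
      case False
      hence tp: "t > 0" using t by simp
      have sm: "\<bar>e s\<bar> \<le> 1" if "0 < s" "s \<le> t" for s
        using all_small[rule_format, of s] t that by auto
      have "Q t \<le> exp (C*t) * \<delta>\<^sup>2 / C" using stepb[OF tp _ sm] t by simp
      also have "\<dots> \<le> exp (C*R) * \<delta>\<^sup>2 / C" using t C by (auto intro!: divide_right_mono mult_right_mono)
      finally show ?thesis by (simp add: Q_def C_def)
    qed
  qed
qed


lemma powr_pm1: "(x::real) \<ge> 0 \<Longrightarrow> p \<ge> 1 \<Longrightarrow> x powr (p-1) * x = x powr p"
proof (cases "x = 0")
  case False
  assume "x \<ge> 0" "p \<ge> 1"
  hence "x > 0" using False by simp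
  thus ?thesis using powr_add[of x "p-1" 1] by simp
qed (auto)

lemma powr_diff_le:
  fixes p K x y :: real
  assumes p: "p \<ge> 1" and y: "0 \<le> y" "y \<le> x" "x \<le> K"
  shows "x powr p - y powr p \<le> p * K powr (p-1) * (x - y)"
proof (cases "y = 0")
  case True
  have "x powr p = x powr (p-1) * x" using powr_pm1[of x p] y p by simp
  also have "\<dots> \<le> K powr (p-1) * x"
    by (rule mult_right_mono[OF powr_mono2]) (use p y in auto)
  also have "\<dots> \<le> p * K powr (p-1) * x"
    by (rule mult_right_mono) (use p y in \<open>auto intro: mult_right_mono[of 1 p, simplified]\<close>)
  finally show ?thesis using True by simp
next
  case False
  hence ypos: "y > 0" using y by simp
  show ?thesis
  proof (cases "y = x")
    case True thus ?thesis by simp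
  next
    case False
    hence yx: "y < x" using y by simp
    obtain z where z: "y < z" "z < x" "x powr p - y powr p = (x - y) * (p * z powr (p-1))"
      using MVT2[OF yx, of "\<lambda>t. t powr p" "\<lambda>t. p * t powr (p-1)"] has_real_derivative_powr ypos y
      by force
    have "z powr (p-1) \<le> K powr (p-1)" by (rule powr_mono2) (use p z ypos y in auto)
    hence "p * z powr (p-1) \<le> p * K powr (p-1)" using p by (simp add: mult_left_mono)
    hence "(x - y) * (p * z powr (p-1)) \<le> (x - y) * (p * K powr (p-1))"
      using yx by (simp add: mult_left_mono)
    thus ?thesis using z by (simp add: algebra_simps)
  qed
qed

definition fnl :: "real \<Rightarrow> real \<Rightarrow> real" where
  "fnl p x = \<bar>x\<bar> powr (p-1) * x"

lemma fnl_pos: "x \<ge> 0 \<Longrightarrow> p \<ge> 1 \<Longrightarrow> fnl p x = x powr p"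
  unfolding fnl_def using powr_pm1 by simp

lemma fnl_neg: "x \<le> 0 \<Longrightarrow> p \<ge> 1 \<Longrightarrow> fnl p x = - ((-x) powr p)"
  unfolding fnl_def using powr_pm1[of "-x" p] by (simp add: abs_if)

lemma fnl_lip_ord:
  assumes p: "p \<ge> 1" and "y \<le> x" "\<bar>x\<bar> \<le> K" "\<bar>y\<bar> \<le> K"
  shows "\<bar>fnl p x - fnl p y\<bar> \<le> p * K powr (p-1) * \<bar>x - y\<bar>"
proof -
  have Kp: "0 \<le> p * K powr (p-1)" using p by simp
  consider "0 \<le> y" | "x \<le> 0" | "y < 0" "0 < x" by linarith
  thus ?thesis
  proof cases
    case 1
    have "fnl p x - fnl p y = x powr p - y powr p" using 1 assms by (simp add: fnl_pos)
    moreover have "y powr p \<le> x powr p" by (rule powr_mono2) (use 1 assms in auto)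
    moreover have "x powr p - y powr p \<le> p * K powr (p-1) * (x - y)"
      by (rule powr_diff_le) (use 1 assms in auto)
    ultimately show ?thesis using assms by simp
  next
    case 2
    have "fnl p x - fnl p y = (-y) powr p - (-x) powr p" using 2 assms by (simp add: fnl_neg)
    moreover have "(-x) powr p \<le> (-y) powr p" by (rule powr_mono2) (use 2 assms in auto)
    moreover have "(-y) powr p - (-x) powr p \<le> p * K powr (p-1) * ((-y) - (-x))"
      by (rule powr_diff_le) (use 2 assms in auto)
    ultimately show ?thesis using assms by simp
  next
    case 3
    have "fnl p x - fnl p y = x powr p + (-y) powr p" using 3 assms by (simp add: fnl_pos fnl_neg)
    moreover have "x powr p - 0 powr p \<le> p * K powr (p-1) * (x - 0)"
      by (rule powr_diff_le) (use 3 assms in auto)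
    moreover have "(-y) powr p - 0 powr p \<le> p * K powr (p-1) * ((-y) - 0)"
      by (rule powr_diff_le) (use 3 assms in auto)
    moreover have "0 \<le> x powr p + (-y) powr p" by simp
    ultimately show ?thesis using 3 by (simp add: algebra_simps)
  qed
qed

lemma fnl_lip:
  assumes p: "p \<ge> 1" and "\<bar>x\<bar> \<le> K" "\<bar>y\<bar> \<le> K"
  shows "\<bar>fnl p x - fnl p y\<bar> \<le> p * K powr (p-1) * \<bar>x - y\<bar>"
proof (cases "y \<le> x")
  case True thus ?thesis using fnl_lip_ord assms by blast
next
  case False
  hence "\<bar>fnl p y - fnl p x\<bar> \<le> p * K powr (p-1) * \<bar>y - x\<bar>" using fnl_lip_ord assms by simp
  thus ?thesis by (simp add: abs_minus_commute)
qed

lemma fnl_abs: "\<bar>fnl p x\<bar> = \<bar>x\<bar> powr p" if "p \<ge> 1"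
  unfolding fnl_def using powr_pm1[of "\<bar>x\<bar>" p] that by (simp add: abs_mult)

lemma fnl_scale: "K > 0 \<Longrightarrow> fnl p (K*x) = K powr p * fnl p x"
proof -
  assume K: "K > 0"
  have "\<bar>K*x\<bar> powr (p-1) = K powr (p-1) * \<bar>x\<bar> powr (p-1)" using K by (simp add: abs_mult powr_mult)
  moreover have "K powr (p-1) * K = K powr p" using K powr_add[of K "p-1" 1] by simp
  ultimately show ?thesis unfolding fnl_def by (metis mult.assoc mult.commute)
qed

lemma A_pow: "2 powr q * A_fun r powr (-q) = (1 + r\<^sup>2) powr q"
proof -
  have pos: "1 + r\<^sup>2 > 0" by (simp add: add_pos_nonneg)
  have "A_fun r powr (-q) = 1 / ((2 / (1 + r\<^sup>2)) powr q)" by (simp add: A_fun_def powr_minus_divide)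
  also have "\<dots> = (1 + r\<^sup>2) powr q / 2 powr q" using pos by (simp add: powr_divide)
  finally show ?thesis by simp
qed



lemma Y_deriv:
  fixes g :: "real \<Rightarrow> real"
  assumes dg: "(g has_real_derivative g1) (at (exp (m  * s)))" and a: "a \<noteq> 0"
  shows "deriv (\<lambda>s. g (exp (m  * s)) / (a * exp (- m * mu'  * s))) s
         = (g1 * m * exp (m  * s) + g (exp (m  * s)) * m * mu') * exp (m*mu' * s) / a"
proof -
  have eqf: "(\<lambda>s. g (exp (m  * s)) / (a * exp (- m * mu'  * s))) = (\<lambda>s. g (exp (m  * s)) * exp (m*mu' * s) / a)"
  proof
    fix s
    have "exp (- m * mu'  * s) = inverse (exp (m*mu' * s))" by (simp add: exp_minus[symmetric])
    thus "g (exp (m  * s)) / (a * exp (- m * mu'  * s)) = g (exp (m  * s)) * exp (m*mu' * s) / a"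
      using a by (simp add: field_simps)
  qed
  have d1: "((\<lambda>s. g (exp (m  * s))) has_real_derivative g1 * (exp (m  * s) * m)) (at s)"
  proof (rule DERIV_chain2[where f=g and g="\<lambda>s. exp (m * s)"])
    show "(g has_real_derivative g1) (at (exp (m * s)))" by (rule dg)
    show "((\<lambda>s. exp (m * s)) has_real_derivative exp (m * s) * m) (at s)"
      by (auto intro!: derivative_eq_intros)
  qed
  have d2: "((\<lambda>s. exp (m*mu' * s)) has_real_derivative exp (m*mu' * s) * (m*mu')) (at s)"
    by (auto intro!: derivative_eq_intros)
  have "((\<lambda>s. g (exp (m  * s)) * exp (m*mu' * s) / a) has_real_derivative
        (g1 * (exp (m  * s) * m) * exp (m*mu' * s) + exp (m*mu' * s) * (m*mu') * g (exp (m  * s))) / a) (at s)"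
    by (rule DERIV_cdivide[OF DERIV_mult[OF d1 d2]])
  hence "deriv (\<lambda>s. g (exp (m  * s)) * exp (m*mu' * s) / a) s =
        (g1 * (exp (m  * s) * m) * exp (m*mu' * s) + exp (m*mu' * s) * (m*mu') * g (exp (m  * s))) / a"
    by (rule DERIV_imp_deriv)
  thus ?thesis unfolding eqf by (simp add: algebra_simps)
qed

lemma bound_aux:
  fixes d0 d1 S m R \<mu> X E a \<rho> :: real
  assumes "\<bar>d1\<bar> \<le> S" "\<bar>d0\<bar> \<le> S" "0 < \<rho>" "\<rho> \<le> R" "0 < X" "X \<le> E" "m > 0" "\<mu> > 0" "a > 0"
  shows "\<bar>(d1 * m * \<rho> + d0 * m * \<mu>) * X / a\<bar> \<le> (1 + m * R + m * \<mu>) * E / a * S"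
proof -
  have S: "S \<ge> 0" using assms(2) by linarith
  have "\<bar>d1 * m * \<rho>\<bar> \<le> S * m * R"
    using assms by (simp add: abs_mult) (intro mult_mono, auto)
  moreover have "\<bar>d0 * m * \<mu>\<bar> \<le> S * m * \<mu>"
    using assms by (simp add: abs_mult)
  ultimately have h: "\<bar>d1 * m * \<rho> + d0 * m * \<mu>\<bar> \<le> S * m * R + S * m * \<mu>" by linarith
  have "\<bar>(d1 * m * \<rho> + d0 * m * \<mu>) * X / a\<bar> = \<bar>d1 * m * \<rho> + d0 * m * \<mu>\<bar> * X / a"
    using assms by (simp add: abs_mult)
  also have "\<dots> \<le> (S * m * R + S * m * \<mu>) * E / a"
    using assms h by (intro divide_right_mono mult_mono) auto
  also have "\<dots> \<le> (1 + m * R + m * \<mu>) * E / a * S"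
    using assms S by (simp add: field_simps)
  finally show ?thesis .
qed

lemma bound_aux0:
  fixes d0 S m R \<mu> X E a :: real
  assumes "\<bar>d0\<bar> \<le> S" "0 < X" "X \<le> E" "m > 0" "\<mu> > 0" "a > 0" "R > 0"
  shows "\<bar>d0 * X / a\<bar> \<le> (1 + m * R + m * \<mu>) * E / a * S"
proof -
  have S: "S \<ge> 0" using assms(1) by linarith
  have "\<bar>d0 * X / a\<bar> = \<bar>d0\<bar> * X / a" using assms by (simp add: abs_mult)
  also have "\<dots> \<le> S * E / a" using assms by (intro divide_right_mono mult_mono) auto
  also have "\<dots> \<le> (1 + m * R + m * \<mu>) * E / a * S"
  proof -
    have "0 \<le> (m * R + m * \<mu>) * E * S" using assms S by simp
    moreover have "(1 + m * R + m * \<mu>) * E * S = S * E + (m * R + m * \<mu>) * E * S" by (simp add: algebra_simps)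
    ultimately have "S * E \<le> (1 + m * R + m * \<mu>) * E * S" by linarith
    thus ?thesis using assms by (simp add: divide_right_mono)
  qed
  finally show ?thesis .
qed



theorem lemma5p2:
  fixes N :: nat and p :: real and u :: "real \<Rightarrow> real \<Rightarrow> real" and ub :: "real \<Rightarrow> real"
  assumes "N \<ge> 3" and "p > pS N"
    and "\<forall>\<gamma>>0. ivp_sol N p \<gamma> (u \<gamma>)"
    and "ubar_sol N p ub"
  shows "\<forall>s0::real.
           uniform_limit {..s0} (\<lambda>\<gamma> s. yhat N p u \<gamma> s) (ybar N p ub) at_top \<and>
           uniform_limit {..s0} (\<lambda>\<gamma> s. deriv (\<lambda>s'. yhat N p u \<gamma> s') s)
              (deriv (ybar N p ub)) at_top"
proof (intro allI)
  fix s0 :: real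
  have N3: "real N \<ge> 3" using assms(1) by simp
  have pS_gt: "pS N > 1" unfolding pS_def using N3 by (simp add: field_simps)
  have p1: "p > 1" using assms(2) pS_gt by simp
  define \<mu> where "\<mu> = mu p"
  define q where "q = q_exp N p"
  define a where "a = a_const N p"
  define m where "m = m_const N p"
  have mup: "\<mu> > 0" unfolding \<mu>_def mu_def using p1 by simp
  have NN: "(real N - 2) * p > real N + 2"
  proof -
    have "pS N * (real N - 2) = real N + 2" unfolding pS_def using N3 by simp
    moreover have "pS N * (real N - 2) < p * (real N - 2)" using assms(2) N3 by simp
    ultimately show ?thesis by (simp add: mult.commute)
  qed
  have mulow: "\<mu> < real N - 2"
  proof -
    have "2 < (real N - 2) * (p - 1)" using NN by (simp add: algebra_simps)
    thus ?thesis unfolding \<mu>_def mu_def using p1 by (simp add: divide_less_eq mult.commute)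
  qed
  have qpos: "q > 0" unfolding q_def q_exp_def using assms(2) N3 by simp
  have apos: "a > 0" unfolding a_def a_const_def \<mu>_def[symmetric] using mup mulow by simp
  have mpos: "m > 0" unfolding m_def m_const_def a_def[symmetric] using apos by simp
  obtain W1 W2 where W: "\<forall>r\<ge>0. (ub has_real_derivative W1 r) (at r within {0..})"
      "\<forall>r>0. (W1 has_real_derivative W2 r) (at r)"
      "\<forall>r>0. W2 r + (real N - 1) / r * W1 r + \<bar>ub r\<bar> powr (p - 1) * ub r = 0"
      "ub 0 = 2 powr (- (q / (p - 1)))" "W1 0 = 0"
    using assms(4) unfolding ubar_sol_def q_def by blast
  define R where "R = exp (m * s0)"
  have Rpos: "R > 0" by (simp add: R_def)
  have contub: "continuous_on {0..R} ub"
    by (rule DERIV_continuous_on[of _ _ W1]) (rule DERIV_subset[of _ _ _ "{0..}"], use W(1) in auto)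
  obtain tM where tM: "tM \<in> {0..R}" "\<forall>y\<in>{0..R}. \<bar>ub y\<bar> \<le> \<bar>ub tM\<bar>"
    using continuous_attains_sup[of "{0..R}" "\<lambda>t. \<bar>ub t\<bar>"] continuous_on_rabs[OF contub] Rpos by auto
  define M where "M = \<bar>ub tM\<bar>"
  have M: "M \<ge> 0" "\<And>t. t \<in> {0..R} \<Longrightarrow> \<bar>ub t\<bar> \<le> M" using tM by (auto simp: M_def)
  define L where "L = p * (M+1) powr (p-1)"
  have L: "L \<ge> 0" using p1 by (simp add: L_def)
  define c where "c = real N * (real N - 2) / 4"
  have c: "c \<ge> 0" using N3 by (simp add: c_def)
  define eps where "eps \<gamma> = exp (- (ln \<gamma> / \<mu>))" for \<gamma>
  define \<delta> where "\<delta> \<gamma> = c * 4 * (eps \<gamma>)^2 * (M+1) + ((1 + (eps \<gamma>)^2 * R^2) powr q - 1) * (M+1) powr p" for \<gamma>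
  define B where "B \<gamma> = exp ((L+2) * R) * (\<delta> \<gamma>)^2 / (L+2)" for \<gamma>
  define lam where "lam = 2 powr (- (q / (p - 1)))"
  have lam: "lam > 0" by (simp add: lam_def)
  define E where "E = exp (m * \<mu> * s0)"
  define K0 where "K0 = (1 + m * R + m * \<mu>) * E / a"
  have K0: "K0 > 0" unfolding K0_def E_def using apos mpos mup Rpos by (simp add: add_pos_nonneg)
  have epslim: "(eps \<longlongrightarrow> 0) at_top"
  proof -
    have "filterlim (\<lambda>\<gamma>. (1/\<mu>) * ln \<gamma>) at_top at_top"
      by (rule filterlim_tendsto_pos_mult_at_top[OF tendsto_const _ ln_at_top]) (use mup in simp)
    hence "filterlim (\<lambda>\<gamma>. - (ln \<gamma> / \<mu>)) at_bot at_top"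
      by (simp add: filterlim_uminus_at_bot)
    from filterlim_compose[OF exp_at_bot this] have "((\<lambda>x. exp (- (ln x / \<mu>))) \<longlongrightarrow> 0) at_top" by simp
    moreover have "eps = (\<lambda>x. exp (- (ln x / \<mu>)))" by (simp add: eps_def fun_eq_iff)
    ultimately show ?thesis by simp
  qed
  have "(\<delta> \<longlongrightarrow> c * 4 * 0^2 * (M+1) + ((1 + 0^2 * R^2) powr q - 1) * (M+1) powr p) at_top"
    unfolding \<delta>_def by (intro tendsto_intros epslim) auto
  hence dlim: "(\<delta> \<longlongrightarrow> 0) at_top" by simp
  have "(B \<longlongrightarrow> exp ((L+2) * R) * 0^2 / (L+2)) at_top"
    unfolding B_def by (intro tendsto_intros dlim) (use L in auto)
  hence Blim: "(B \<longlongrightarrow> 0) at_top" by simp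
  have key: "\<forall>s\<le>s0. \<bar>yhat N p u \<gamma> s - ybar N p ub s\<bar> \<le> K0 * sqrt (B \<gamma>) \<and>
      \<bar>deriv (yhat N p u \<gamma>) s - deriv (ybar N p ub) s\<bar> \<le> K0 * sqrt (B \<gamma>)"
    if g: "\<gamma> > 0" "B \<gamma> < 1/4" for \<gamma>
  proof -
    obtain U1 U2 where U: "\<forall>r\<ge>0. (u \<gamma> has_real_derivative U1 r) (at r within {0..})"
      "\<forall>r>0. (U1 has_real_derivative U2 r) (at r)"
      "\<forall>r>0. U2 r + (real N - 1) / r * U1 r + c * (A_fun r)\<^sup>2 * u \<gamma> r
                + A_fun r powr (- q) * (\<bar>u \<gamma> r\<bar> powr (p - 1) * u \<gamma> r) = 0"
      "u \<gamma> 0 = \<gamma>" "U1 0 = 0"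
      using assms(3) g(1) unfolding ivp_sol_def c_def q_def by blast
    define \<epsilon> where "\<epsilon> = eps \<gamma>"
    have ep: "\<epsilon> > 0" by (simp add: \<epsilon>_def eps_def)
    define v where "v t = lam * u \<gamma> (\<epsilon> * t) / \<gamma>" for t
    define v1 where "v1 t = lam * (U1 (\<epsilon> * t) * \<epsilon>) / \<gamma>" for t
    define v2 where "v2 t = lam * (U2 (\<epsilon> * t) * \<epsilon> * \<epsilon>) / \<gamma>" for t
    define Gv where "Gv t = c * \<epsilon>^2 * (A_fun (\<epsilon> * t))^2 * v t + (1 + (\<epsilon> * t)^2) powr q * fnl p (v t)" for t
    have img: "(\<lambda>t. \<epsilon> * t) ` {0..} = {0..}"
    proof -
      have "x \<in> (\<lambda>t. \<epsilon> * t) ` {0..}" if "x \<ge> 0" for x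
        using that ep by (intro image_eqI[of _ _ "x / \<epsilon>"]) auto
      thus ?thesis using ep by auto
    qed
    have dv: "(v has_real_derivative v1 t) (at t within {0..})" if t: "t \<ge> 0" for t
    proof -
      have ch: "((u \<gamma> \<circ> (\<lambda>t. \<epsilon> * t)) has_real_derivative U1 (\<epsilon> * t) * \<epsilon>) (at t within {0..})"
      proof (rule DERIV_image_chain)
        show "(u \<gamma> has_real_derivative U1 (\<epsilon> * t)) (at (\<epsilon> * t) within (\<lambda>t. \<epsilon> * t) ` {0..})"
          unfolding img using U(1) t ep by simp
        show "((\<lambda>t. \<epsilon> * t) has_real_derivative \<epsilon>) (at t within {0..})"
          by (auto intro!: derivative_eq_intros)
      qed
      have "((\<lambda>t. lam * (u \<gamma> \<circ> (\<lambda>t. \<epsilon> * t)) t / \<gamma>) has_real_derivative lam * (U1 (\<epsilon> * t) * \<epsilon>) / \<gamma>) (at t within {0..})"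
        by (rule DERIV_cdivide[OF DERIV_cmult[OF ch]])
      moreover have "(\<lambda>t. lam * (u \<gamma> \<circ> (\<lambda>t. \<epsilon> * t)) t / \<gamma>) = v" by (simp add: v_def fun_eq_iff)
      ultimately show ?thesis by (simp add: v1_def)
    qed
    have dv1: "(v1 has_real_derivative v2 t) (at t)" if t: "t > 0" for t
    proof -
      have ch: "((\<lambda>t. U1 (\<epsilon> * t)) has_real_derivative U2 (\<epsilon> * t) * \<epsilon>) (at t)"
      proof (rule DERIV_chain2[where f=U1 and g="\<lambda>t. \<epsilon> * t"])
        show "(U1 has_real_derivative U2 (\<epsilon> * t)) (at (\<epsilon> * t))" using U(2) t ep by simp
        show "((\<lambda>t. \<epsilon> * t) has_real_derivative \<epsilon>) (at t)" by (auto intro!: derivative_eq_intros)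
      qed
      have "((\<lambda>t. lam * (U1 (\<epsilon> * t) * \<epsilon>) / \<gamma>) has_real_derivative lam * (U2 (\<epsilon> * t) * \<epsilon> * \<epsilon>) / \<gamma>) (at t)"
        by (rule DERIV_cdivide[OF DERIV_cmult[OF DERIV_cmult_right[OF ch]]])
      moreover have "(\<lambda>t. lam * (U1 (\<epsilon> * t) * \<epsilon>) / \<gamma>) = v1" by (simp add: v1_def fun_eq_iff)
      ultimately show ?thesis by (simp add: v2_def)
    qed
    have e2g: "\<epsilon>^2 * \<gamma> powr (p-1) = 1"
    proof -
      have "\<epsilon>^2 = exp (2 * (- (ln \<gamma> / \<mu>)))" unfolding \<epsilon>_def eps_def
        by (simp add: power2_eq_square exp_add[symmetric])
      also have "2 * (- (ln \<gamma> / \<mu>)) = - ((p-1) * ln \<gamma>)" using p1 by (simp add: \<mu>_def mu_def field_simps)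
      finally have "\<epsilon>^2 = exp (- ((p-1) * ln \<gamma>))" .
      moreover have "\<gamma> powr (p-1) = exp ((p-1) * ln \<gamma>)" using g by (simp add: powr_def)
      ultimately show ?thesis by (simp add: exp_minus)
    qed
    have lamp: "lam powr (p-1) = 2 powr (-q)"
      unfolding lam_def powr_powr using p1 by simp
    have S: "lam * \<epsilon>^2 / \<gamma> * (\<gamma>/lam) powr p = 2 powr q"
    proof -
      have "(\<gamma>/lam) powr p = (\<gamma>/lam) powr (p-1) * (\<gamma>/lam)" using powr_pm1[of "\<gamma>/lam" p] g lam p1 by simp
      also have "(\<gamma>/lam) powr (p-1) = \<gamma> powr (p-1) / 2 powr (-q)" using g lam lamp by (simp add: powr_divide)
      finally have "lam * \<epsilon>^2 / \<gamma> * (\<gamma>/lam) powr p = (\<epsilon>^2 * \<gamma> powr (p-1)) / 2 powr (-q)"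
        using g lam by (simp add: field_simps)
      thus ?thesis using e2g by (simp add: powr_minus_divide)
    qed
    have eqv: "v2 t + (real N - 1) / t * v1 t + Gv t = 0" if t: "t > 0" for t
    proof -
      define r where "r = \<epsilon> * t"
      have r: "r > 0" using t ep by (simp add: r_def)
      have Ueq: "U2 r + (real N - 1) / r * U1 r + c * (A_fun r)\<^sup>2 * u \<gamma> r
                + A_fun r powr (- q) * (\<bar>u \<gamma> r\<bar> powr (p - 1) * u \<gamma> r) = 0" using U(3) r by simp
      have uv: "u \<gamma> r = (\<gamma>/lam) * v t" using g lam by (simp add: v_def r_def)
      have scal: "lam * \<epsilon>^2 / \<gamma> * (A_fun r powr (- q) * (\<bar>u \<gamma> r\<bar> powr (p - 1) * u \<gamma> r))
          = (1 + r^2) powr q * fnl p (v t)"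
      proof -
        have "\<bar>u \<gamma> r\<bar> powr (p - 1) * u \<gamma> r = (\<gamma>/lam) powr p * fnl p (v t)"
          using fnl_scale[of "\<gamma>/lam" p "v t"] g lam uv by (simp add: fnl_def)
        hence "lam * \<epsilon>^2 / \<gamma> * (A_fun r powr (- q) * (\<bar>u \<gamma> r\<bar> powr (p - 1) * u \<gamma> r))
            = (lam * \<epsilon>^2 / \<gamma> * (\<gamma>/lam) powr p) * A_fun r powr (- q) * fnl p (v t)" by simp
        also have "\<dots> = (2 powr q * A_fun r powr (- q)) * fnl p (v t)" using S by simp
        also have "\<dots> = (1 + r^2) powr q * fnl p (v t)" by (simp add: A_pow)
        finally show ?thesis .
      qed
      have "v2 t + (real N - 1) / t * v1 t + c * \<epsilon>^2 * (A_fun r)^2 * v t =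
            lam * \<epsilon>^2 / \<gamma> * (U2 r + (real N - 1) / r * U1 r + c * (A_fun r)\<^sup>2 * u \<gamma> r)"
        using t ep g by (simp add: v_def v1_def v2_def r_def field_simps power2_eq_square)
      hence "v2 t + (real N - 1) / t * v1 t + Gv t =
            lam * \<epsilon>^2 / \<gamma> * (U2 r + (real N - 1) / r * U1 r + c * (A_fun r)\<^sup>2 * u \<gamma> r
             + A_fun r powr (- q) * (\<bar>u \<gamma> r\<bar> powr (p - 1) * u \<gamma> r))"
        using scal by (simp add: Gv_def r_def[symmetric] algebra_simps)
      thus ?thesis using Ueq by simp
    qed
    have dpos: "\<delta> \<gamma> \<ge> 0"
    proof -
      have "(1 + (eps \<gamma>)^2 * R^2) powr q \<ge> 1" using qpos by (intro ge_one_powr_ge_zero) auto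
      thus ?thesis unfolding \<delta>_def using c M by (intro add_nonneg_nonneg mult_nonneg_nonneg) auto
    qed
    have bnd: "\<bar>Gv t - fnl p (ub t)\<bar> \<le> \<delta> \<gamma> + L * \<bar>v t - ub t\<bar>"
      if t: "0 < t" "t \<le> R" "\<bar>v t - ub t\<bar> \<le> 1" for t
    proof -
      define r where "r = \<epsilon> * t"
      have hM: "\<bar>ub t\<bar> \<le> M" using M(2)[of t] t by simp
      have hv: "\<bar>v t\<bar> \<le> M + 1" using hM t by linarith
      have A2: "(A_fun r)^2 \<le> 4"
      proof -
        have "A_fun r \<le> 2" "A_fun r \<ge> 0" unfolding A_fun_def by (auto simp: field_simps add_pos_nonneg)
        hence "(A_fun r)^2 \<le> 2^2" by (intro power_mono) auto
        thus ?thesis by simp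
      qed
      have T1: "\<bar>c * \<epsilon>^2 * (A_fun r)^2 * v t\<bar> \<le> c * 4 * \<epsilon>^2 * (M+1)"
      proof -
        have "\<bar>c * \<epsilon>^2 * (A_fun r)^2 * v t\<bar> = (c * \<epsilon>^2) * ((A_fun r)^2 * \<bar>v t\<bar>)"
          using c by (simp add: abs_mult)
        also have "\<dots> \<le> (c * \<epsilon>^2) * (4 * (M+1))"
          using c A2 hv by (intro mult_left_mono mult_mono) auto
        finally show ?thesis by (simp add: algebra_simps)
      qed
      have rR: "r^2 \<le> \<epsilon>^2 * R^2"
      proof -
        have "r \<le> \<epsilon> * R" using t ep by (simp add: r_def)
        hence "r^2 \<le> (\<epsilon> * R)^2" using t ep by (intro power_mono) (auto simp: r_def)
        thus ?thesis by (simp add: power_mult_distrib)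
      qed
      have P1: "(1 + r^2) powr q \<ge> 1" using qpos by (intro ge_one_powr_ge_zero) auto
      have P2: "(1 + r^2) powr q \<le> (1 + \<epsilon>^2 * R^2) powr q" using qpos rR by (intro powr_mono2) auto
      have F: "\<bar>fnl p (v t)\<bar> \<le> (M+1) powr p" using hv p1 by (simp add: fnl_abs powr_mono2)
      have T2: "\<bar>((1 + r^2) powr q - 1) * fnl p (v t)\<bar> \<le> ((1 + \<epsilon>^2 * R^2) powr q - 1) * (M+1) powr p"
      proof -
        have "\<bar>((1 + r^2) powr q - 1) * fnl p (v t)\<bar> = ((1 + r^2) powr q - 1) * \<bar>fnl p (v t)\<bar>"
          using P1 by (simp add: abs_mult)
        also have "\<dots> \<le> ((1 + \<epsilon>^2 * R^2) powr q - 1) * (M+1) powr p"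
          using P1 P2 F by (intro mult_mono) auto
        finally show ?thesis .
      qed
      have T3: "\<bar>fnl p (v t) - fnl p (ub t)\<bar> \<le> L * \<bar>v t - ub t\<bar>"
        unfolding L_def using fnl_lip[of p "v t" "M+1" "ub t"] p1 hv hM by simp
      have "Gv t - fnl p (ub t) = c * \<epsilon>^2 * (A_fun r)^2 * v t + ((1 + r^2) powr q - 1) * fnl p (v t)
            + (fnl p (v t) - fnl p (ub t))"
        by (simp add: Gv_def r_def algebra_simps)
      hence "\<bar>Gv t - fnl p (ub t)\<bar> \<le> \<bar>c * \<epsilon>^2 * (A_fun r)^2 * v t\<bar> + \<bar>((1 + r^2) powr q - 1) * fnl p (v t)\<bar>
            + \<bar>fnl p (v t) - fnl p (ub t)\<bar>" by linarith
      also have "\<dots> \<le> \<delta> \<gamma> + L * \<bar>v t - ub t\<bar>" using T1 T2 T3 by (simp add: \<delta>_def \<epsilon>_def)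
      finally show ?thesis .
    qed
    have cmp: "\<forall>t\<in>{0..R}. ((\<lambda>t. v t - ub t) t)\<^sup>2 + ((\<lambda>t. v1 t - W1 t) t)\<^sup>2
                 \<le> exp ((L+2) * R) * (\<delta> \<gamma>)\<^sup>2 / (L+2)"
    proof (rule comparison[where e="\<lambda>t. v t - ub t" and ea="\<lambda>t. v1 t - W1 t"
          and eb="\<lambda>t. v2 t - W2 t" and D="\<lambda>t. Gv t - fnl p (ub t)" and k="real N - 1"])
      show "R > 0" by (rule Rpos)
      show "real N - 1 \<ge> 0" using N3 by simp
      show "L \<ge> 0" by (rule L)
      show "\<delta> \<gamma> \<ge> 0" by (rule dpos)
      show "((\<lambda>t. v t - ub t) has_real_derivative v1 t - W1 t) (at t within {0..})" if "t \<ge> 0" for t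
        using DERIV_diff[OF dv[OF that] W(1)[rule_format, OF that]] .
      show "((\<lambda>t. v1 t - W1 t) has_real_derivative v2 t - W2 t) (at t)" if "t > 0" for t
        using DERIV_diff[OF dv1[OF that] W(2)[rule_format, OF that]] .
      show "v2 t - W2 t + (real N - 1) / t * (v1 t - W1 t) + (Gv t - fnl p (ub t)) = 0" if "t > 0" for t
      proof -
        have "W2 t + (real N - 1) / t * W1 t + fnl p (ub t) = 0" using W(3) that by (simp add: fnl_def)
        moreover have "v2 t + (real N - 1) / t * v1 t + Gv t = 0" by (rule eqv[OF that])
        moreover have "(real N - 1) / t * (v1 t - W1 t) = (real N - 1) / t * v1 t - (real N - 1) / t * W1 t"
          by (simp add: right_diff_distrib)
        ultimately show ?thesis by linarith
      qed
      show "v 0 - ub 0 = 0" using U(4) W(4) g by (simp add: v_def lam_def)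
      show "v1 0 - W1 0 = 0" using U(5) W(5) by (simp add: v1_def)
      show "\<bar>Gv t - fnl p (ub t)\<bar> \<le> \<delta> \<gamma> + L * \<bar>v t - ub t\<bar>" if "0 < t" "t \<le> R" "\<bar>v t - ub t\<bar> \<le> 1" for t
        using bnd that by simp
      show "exp ((L+2) * R) * (\<delta> \<gamma>)\<^sup>2 / (L+2) < 1/4" using g(2) by (simp add: B_def)
    qed
    have sq: "\<bar>v t - ub t\<bar> \<le> sqrt (B \<gamma>)" "\<bar>v1 t - W1 t\<bar> \<le> sqrt (B \<gamma>)" if "t \<in> {0..R}" for t
    proof -
      have h: "(v t - ub t)^2 + (v1 t - W1 t)^2 \<le> B \<gamma>" using cmp that by (simp add: B_def)
      have "\<bar>v t - ub t\<bar>^2 \<le> B \<gamma>" using h by (simp add: power2_abs) (smt (verit) zero_le_power2)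
      thus "\<bar>v t - ub t\<bar> \<le> sqrt (B \<gamma>)" by (rule real_le_rsqrt)
      have "\<bar>v1 t - W1 t\<bar>^2 \<le> B \<gamma>" using h by (simp add: power2_abs) (smt (verit) zero_le_power2)
      thus "\<bar>v1 t - W1 t\<bar> \<le> sqrt (B \<gamma>)" by (rule real_le_rsqrt)
    qed
    have yeq: "yhat N p u \<gamma> = (\<lambda>s. v (exp (m * s)) / (a * exp (- m * \<mu> * s)))"
    proof (rule ext)
      fix s
      have x1: "m * (s - ln \<gamma> / (m * \<mu>)) = - (ln \<gamma> / \<mu>) + m * s" using mpos mup by (simp add: field_simps)
      have e1: "exp (m * (s - ln \<gamma> / (m * \<mu>))) = \<epsilon> * exp (m * s)"
        unfolding x1 exp_add \<epsilon>_def eps_def ..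
      have "exp (m * (s - ln \<gamma> / (m * \<mu>))) powr (- \<mu>) = exp (- \<mu> * (m * (s - ln \<gamma> / (m * \<mu>))))"
        by (simp add: powr_def)
      also have "- \<mu> * (m * (s - ln \<gamma> / (m * \<mu>))) = ln \<gamma> + (- m * \<mu> * s)"
        using mpos mup by (simp add: field_simps)
      also have "exp (ln \<gamma> + (- m * \<mu> * s)) = \<gamma> * exp (- m * \<mu> * s)" using g unfolding exp_add by simp
      finally have e2: "exp (m * (s - ln \<gamma> / (m * \<mu>))) powr (- \<mu>) = \<gamma> * exp (- m * \<mu> * s)" .
      show "yhat N p u \<gamma> s = v (exp (m * s)) / (a * exp (- m * \<mu> * s))"
        unfolding yhat_def y_fun_def m_def[symmetric] \<mu>_def[symmetric] a_def[symmetric] q_def[symmetric]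
          lam_def[symmetric] e2
        unfolding e1
        using g by (simp add: v_def)
    qed
    have ybeq: "ybar N p ub = (\<lambda>s. ub (exp (m * s)) / (a * exp (- m * \<mu> * s)))"
      by (simp add: fun_eq_iff ybar_def m_def a_def \<mu>_def)
    show ?thesis
    proof (intro allI impI conjI)
      fix s assume s: "s \<le> s0"
      define \<rho> where "\<rho> = exp (m * s)"
      have \<rho>: "0 < \<rho>" "\<rho> \<le> R" using s mpos by (auto simp: \<rho>_def R_def)
      hence \<rho>R: "\<rho> \<in> {0..R}" by simp
      define X where "X = exp (m * \<mu> * s)"
      have X: "0 < X" "X \<le> E" using s mpos mup by (auto simp: X_def E_def)
      have ex: "exp (- m * \<mu> * s) = inverse X" by (simp add: X_def exp_minus[symmetric])
      have "yhat N p u \<gamma> s - ybar N p ub s = (v \<rho> - ub \<rho>) * X / a"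
        unfolding yeq ybeq ex \<rho>_def[symmetric] using apos X by (simp add: field_simps)
      thus "\<bar>yhat N p u \<gamma> s - ybar N p ub s\<bar> \<le> K0 * sqrt (B \<gamma>)"
        using bound_aux0[OF sq(1)[OF \<rho>R] X mpos mup apos Rpos] by (simp add: K0_def mult.commute)
      have dva: "(v has_real_derivative v1 \<rho>) (at (exp (m * s)))"
        using dv[of \<rho>] \<rho> at_within_interior[of \<rho> "{0..}"] by (simp add: \<rho>_def)
      have dwa: "(ub has_real_derivative W1 \<rho>) (at (exp (m * s)))"
        using W(1)[rule_format, of \<rho>] \<rho> at_within_interior[of \<rho> "{0..}"] by (simp add: \<rho>_def)
      have "deriv (yhat N p u \<gamma>) s - deriv (ybar N p ub) s = ((v1 \<rho> - W1 \<rho>) * m * \<rho> + (v \<rho> - ub \<rho>) * m * \<mu>) * X / a"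
        unfolding yeq ybeq Y_deriv[OF dva apos[THEN less_imp_neq, symmetric]]
          Y_deriv[OF dwa apos[THEN less_imp_neq, symmetric]] \<rho>_def[symmetric] X_def[symmetric]
        using apos by (simp add: field_simps)
      thus "\<bar>deriv (yhat N p u \<gamma>) s - deriv (ybar N p ub) s\<bar> \<le> K0 * sqrt (B \<gamma>)"
        using bound_aux[OF sq(2)[OF \<rho>R] sq(1)[OF \<rho>R] \<rho> X mpos mup apos] by (simp add: K0_def)
    qed
  qed
  show "uniform_limit {..s0} (\<lambda>\<gamma> s. yhat N p u \<gamma> s) (ybar N p ub) at_top \<and>
           uniform_limit {..s0} (\<lambda>\<gamma> s. deriv (\<lambda>s'. yhat N p u \<gamma> s') s)
              (deriv (ybar N p ub)) at_top"
    unfolding uniform_limit_iff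
  proof (intro conjI allI impI)
    fix \<eta> :: real assume eta: "\<eta> > 0"
    have ev: "eventually (\<lambda>\<gamma>. \<gamma> > 0 \<and> B \<gamma> < min (1/4) ((\<eta>/K0)^2)) at_top"
      using eventually_gt_at_top[of 0] order_tendstoD(2)[OF Blim, of "min (1/4) ((\<eta>/K0)^2)"] eta K0
      by (auto intro: eventually_conj)
    have small: "K0 * sqrt (B \<gamma>) < \<eta>" if "B \<gamma> < (\<eta>/K0)^2" for \<gamma>
    proof -
      have "sqrt (B \<gamma>) < sqrt ((\<eta>/K0)^2)" using that by (rule real_sqrt_less_mono)
      also have "\<dots> = \<eta>/K0" using eta K0 by simp
      finally show ?thesis using K0 by (simp add: field_simps)
    qed
    show "\<forall>\<^sub>F \<gamma> in at_top. \<forall>s\<in>{..s0}. dist (yhat N p u \<gamma> s) (ybar N p ub s) < \<eta>"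
      using ev
    proof (rule eventually_mono)
      fix \<gamma> assume h: "\<gamma> > 0 \<and> B \<gamma> < min (1/4) ((\<eta>/K0)^2)"
      show "\<forall>s\<in>{..s0}. dist (yhat N p u \<gamma> s) (ybar N p ub s) < \<eta>"
        using key[of \<gamma>] h small[of \<gamma>] by (fastforce simp: dist_real_def)
    qed
    show "\<forall>\<^sub>F \<gamma> in at_top. \<forall>s\<in>{..s0}. dist (deriv (yhat N p u \<gamma>) s) (deriv (ybar N p ub) s) < \<eta>"
      using ev
    proof (rule eventually_mono)
      fix \<gamma> assume h: "\<gamma> > 0 \<and> B \<gamma> < min (1/4) ((\<eta>/K0)^2)"
      show "\<forall>s\<in>{..s0}. dist (deriv (yhat N p u \<gamma>) s) (deriv (ybar N p ub) s) < \<eta>"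
        using key[of \<gamma>] h small[of \<gamma>] by (fastforce simp: dist_real_def)
    qed
  qed
qed
end
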